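(* Let $H=(\mathcal{V},\mathcal{E})$ be the hypergraph representation of $\{\mathcal{I}_j\}$. Then $H$ is connected if and only if $\mathsf{M}^\star(\{\mathcal{I}_j\})<\left|\bigcup_j\mathcal{I}_j\right|$. Moreover, $\{\mathcal{I}_j\}$ is $1$-critical if and only if $\mathcal{E}$ is a minimal connected dominating edge set of $H$.
   Context: $\{\mathcal{I}_j\}=(\mathcal{I}_1,\dots,\mathcal{I}_n)$ is a family of finite sets (message indices held by clients $c_1,\dots,c_n$). $\mathsf{M}^\star(\{\mathcal{I}_j\})$ is the optimal value of: minimize $\sum_{j\in[n]}a_j$ over $a\in\mathbb{Z}^n$ subject to $\sum_{j\in\mathcal{S}}a_j\ge\left|\bigcap_{j\in[n]\setminus\mathcal{S}}\bar{\mathcal{I}}_j\right|$ for every nonempty proper $\mathcal{S}\subsetneq[n]$, where $\bar{\mathcal{I}}_j=(\bigcup_i\mathcal{I}_i)\setminus\mathcal{I}_j$. A family $\{\mathcal{I}_j\}$ is $1$-critical if (i) $|\bigcup_j\mathcal{I}_j|-\mathsf{M}^\star(\{\mathcal{I}_j\})=1$ and (ii) $\mathsf{M}^\star(\{\mathcal{I}_j\setminus\{i\}\})=\mathsf{M}^\star(\{\mathcal{I}_j\})$ for all $i\in\bigcup_j\mathcal{I}_j$. The hypergraph representation of $\{\mathcal{I}_j\}$ is the hypergraph (repeated edges allowed) with vertex set $\mathcal{V}=\{c_1,\dots,c_n\}$ and one hyperedge for each message index $e\in\bigcup_j\mathcal{I}_j$, where $c_j\in e$ iff $e\in\mathcal{I}_j$.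 For a hypergraph $H=(\mathcal{V},\mathcal{E})$, an edge set $\mathcal{E}'\subseteq\mathcal{E}$ is a minimal connected dominating edge set if $(\mathcal{V},\mathcal{E}')$ is connected and removing any edge from $\mathcal{E}'$ makes it disconnected. *)

theory Defs
  imports Main
begin

text \<open>A family of message-index sets I 1, ..., I n (clients c_1..c_n are indices 1..n).\<close>

definition universe :: "(nat \<Rightarrow> 'a set) \<Rightarrow> nat \<Rightarrow> 'a set" where
  "universe I n = (\<Union>j\<in>{1..n}. I j)"

definition compl_set :: "(nat \<Rightarrow> 'a set) \<Rightarrow> nat \<Rightarrow> nat \<Rightarrow> 'a set" where
  "compl_set I n j = universe I n - I j"

definition feasible :: "(nat \<Rightarrow> 'a set) \<Rightarrow> nat \<Rightarrow> (nat \<Rightarrow> int) \<Rightarrow> bool" where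
  "feasible I n a \<longleftrightarrow>
     (\<forall>S. S \<subseteq> {1..n} \<and> S \<noteq> {} \<and> S \<noteq> {1..n} \<longrightarrow>
        (\<Sum>j\<in>S. a j) \<ge> int (card (\<Inter>j\<in>{1..n} - S. compl_set I n j)))"

definition Mstar :: "(nat \<Rightarrow> 'a set) \<Rightarrow> nat \<Rightarrow> int" where
  "Mstar I n = Inf {(\<Sum>j\<in>{1..n}. a j) | a. feasible I n a}"

definition one_critical :: "(nat \<Rightarrow> 'a set) \<Rightarrow> nat \<Rightarrow> bool" where
  "one_critical I n \<longleftrightarrow>
     int (card (universe I n)) - Mstar I n = 1 \<and>
     (\<forall>i\<in>universe I n. Mstar (\<lambda>j. I j - {i}) n = Mstar I n)"

text \<open>General hypergraph with vertex set V and hyperedges indexed by 'e, the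
  edge with index e having vertex set edge e. Connectivity of (V, E').\<close>
definition hg_connected :: "'v set \<Rightarrow> ('e \<Rightarrow> 'v set) \<Rightarrow> 'e set \<Rightarrow> bool" where
  "hg_connected V edge E' \<longleftrightarrow>
     (\<forall>u\<in>V. \<forall>w\<in>V. (u, w) \<in> {(x, y). x \<in> V \<and> y \<in> V \<and> (\<exists>e\<in>E'. x \<in> edge e \<and> y \<in> edge e)}\<^sup>*)"

definition min_conn_dom_edge_set :: "'v set \<Rightarrow> ('e \<Rightarrow> 'v set) \<Rightarrow> 'e set \<Rightarrow> 'e set \<Rightarrow> bool" where
  "min_conn_dom_edge_set V edge E E' \<longleftrightarrow>
     E' \<subseteq> E \<and> hg_connected V edge E' \<and> (\<forall>e\<in>E'. \<not> hg_connected V edge (E' - {e}))"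

text \<open>Hypergraph representation: vertices 1..n, one hyperedge per message index e
  in the universe, containing client j iff e is in I j.\<close>
definition rep_edge :: "(nat \<Rightarrow> 'a set) \<Rightarrow> nat \<Rightarrow> 'a \<Rightarrow> nat set" where
  "rep_edge I n e = {j \<in> {1..n}. e \<in> I j}"

end

theory Submission
  imports Defs
begin


lemma crossing_aux:
  assumes "(x, y) \<in> {(x, y). x \<in> V \<and> y \<in> V \<and> (\<exists>e\<in>E'. x \<in> edge e \<and> y \<in> edge e)}\<^sup>*"
    and "x \<in> R" and "y \<notin> R"
  shows "\<exists>e\<in>E'. \<exists>p\<in>R. \<exists>q\<in>V - R. p \<in> edge e \<and> q \<in> edge e"
  using assms
proof (induction rule: rtrancl_induct)
  case base then show ?case by simp
next
  case (step z y)
  show ?case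
  proof (cases "z \<in> R")
    case True
    from step(2) have yV: "y \<in> V" and ex: "\<exists>e\<in>E'. z \<in> edge e \<and> y \<in> edge e" by simp_all
    from ex obtain e where e: "e \<in> E'" "z \<in> edge e" "y \<in> edge e" by blast
    have "y \<in> V - R" using yV step(5) by simp
    then show ?thesis using True e by blast
  next
    case False
    then show ?thesis using step(3,4) by simp
  qed
qed

lemma crossing:
  assumes "hg_connected V edge E'" "R \<subseteq> V" "R \<noteq> {}" "R \<noteq> V"
  shows "\<exists>e\<in>E'. \<exists>p\<in>R. \<exists>q\<in>V - R. p \<in> edge e \<and> q \<in> edge e"
proof -
  obtain x where x: "x \<in> R" using assms by blast
  obtain y where y: "y \<in> V" "y \<notin> R" using assms by blast
  have xV: "x \<in> V" using x assms by blast
  have "(x, y) \<in> {(x, y). x \<in> V \<and> y \<in> V \<and> (\<exists>e\<in>E'. x \<in> edge e \<and> y \<in> edge e)}\<^sup>*"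
    using assms(1) xV y(1) unfolding hg_connected_def by blast
  then show ?thesis by (rule crossing_aux[OF _ x y(2)])
qed

definition Inv :: "nat set \<Rightarrow> ('e \<Rightarrow> nat set) \<Rightarrow> 'e set \<Rightarrow> nat \<Rightarrow> nat set \<Rightarrow> (nat \<Rightarrow> int) \<Rightarrow> bool" where
  "Inv V E U v R a \<longleftrightarrow> v \<in> R \<and> R \<subseteq> V \<and>
     sum a V = int (card {e\<in>U. E e \<inter> R \<noteq> {}}) - 1 \<and>
     (\<forall>S\<subseteq>V. sum a S \<ge> int (card {e\<in>U. E e \<inter> R \<noteq> {} \<and> E e \<inter> R \<subseteq> S}) - (if R \<subseteq> S then 1 else 0))"

lemma inv_base:
  assumes "finite V" "finite U" "v \<in> V"
  shows "Inv V E U v {v} (\<lambda>j. if j = v then int (card {e\<in>U. v \<in> E e}) - 1 else 0)"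
proof -
  have s: "sum (\<lambda>j. if j = v then int (card {e\<in>U. v \<in> E e}) - 1 else 0) S
      = (if v \<in> S then int (card {e\<in>U. v \<in> E e}) - 1 else 0)" if "finite S" for S
    using that by (simp add: sum.delta)
  have e1: "{e\<in>U. E e \<inter> {v} \<noteq> {}} = {e\<in>U. v \<in> E e}" by auto
  have e2: "{e\<in>U. E e \<inter> {v} \<noteq> {} \<and> E e \<inter> {v} \<subseteq> S} = (if v \<in> S then {e\<in>U. v \<in> E e} else {})" for S
    by auto
  show ?thesis unfolding Inv_def e1 e2
  proof (intro conjI allI impI)
    show "v \<in> {v}" by simp
    show "{v} \<subseteq> V" using assms by simp
    show "sum (\<lambda>j. if j = v then int (card {e\<in>U. v \<in> E e}) - 1 else 0) V = int (card {e\<in>U. v \<in> E e}) - 1"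
      using s[OF assms(1)] assms(3) by simp
    fix S assume SV: "S \<subseteq> V"
    then have fS: "finite S" using assms(1) finite_subset by blast
    show "int (card (if v \<in> S then {e\<in>U. v \<in> E e} else {})) - (if {v} \<subseteq> S then 1 else 0)
       \<le> sum (\<lambda>j. if j = v then int (card {e\<in>U. v \<in> E e}) - 1 else 0) S"
      unfolding s[OF fS] by simp
  qed
qed

lemma inv_step:
  assumes fV: "finite V" and fU: "finite U" and EV: "\<forall>e\<in>U. E e \<subseteq> V"
    and inv: "Inv V E U v R a"
    and e0: "e0 \<in> U" "x \<in> R" "w \<in> V - R" "x \<in> E e0" "w \<in> E e0"
  shows "Inv V E U v (insert w R)
     (\<lambda>j. a j + (if j = w then int (card {e\<in>U. w \<in> E e \<and> E e \<inter> R = {}}) else 0))"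
proof -
  define d where "d = int (card {e\<in>U. w \<in> E e \<and> E e \<inter> R = {}})"
  define a' where "a' = (\<lambda>j. a j + (if j = w then d else 0))"
  have sa: "sum a' S = sum a S + (if w \<in> S then d else 0)" if "finite S" for S
    unfolding a'_def using that by (simp add: sum.distrib sum.delta)
  from inv have vR: "v \<in> R" and RV: "R \<subseteq> V"
    and sV: "sum a V = int (card {e\<in>U. E e \<inter> R \<noteq> {}}) - 1"
    and cS: "\<And>S. S \<subseteq> V \<Longrightarrow> sum a S \<ge> int (card {e\<in>U. E e \<inter> R \<noteq> {} \<and> E e \<inter> R \<subseteq> S}) - (if R \<subseteq> S then 1 else 0)"
    unfolding Inv_def by blast+
  have touch: "{e\<in>U. E e \<inter> insert w R \<noteq> {}} = {e\<in>U. E e \<inter> R \<noteq> {}} \<union> {e\<in>U. w \<in> E e \<and> E e \<inter> R = {}}"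
    by blast
  have ctouch: "card {e\<in>U. E e \<inter> insert w R \<noteq> {}} = card {e\<in>U. E e \<inter> R \<noteq> {}} + card {e\<in>U. w \<in> E e \<and> E e \<inter> R = {}}"
    unfolding touch by (rule card_Un_disjoint) (use fU in auto)
  have sV': "sum a' V = int (card {e\<in>U. E e \<inter> insert w R \<noteq> {}}) - 1"
  proof -
    have "sum a' V = sum a V + d" using sa[OF fV] e0 by simp
    then show ?thesis using sV ctouch unfolding d_def by simp
  qed
  have cS': "sum a' S \<ge> int (card {e\<in>U. E e \<inter> insert w R \<noteq> {} \<and> E e \<inter> insert w R \<subseteq> S}) - (if insert w R \<subseteq> S then 1 else 0)"
    if SV: "S \<subseteq> V" for S
  proof (cases "w \<in> S")
    case True
    have eq: "{e\<in>U. E e \<inter> insert w R \<noteq> {} \<and> E e \<inter> insert w R \<subseteq> S}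
       = {e\<in>U. E e \<inter> R \<noteq> {} \<and> E e \<inter> R \<subseteq> S} \<union> {e\<in>U. w \<in> E e \<and> E e \<inter> R = {}}"
      using True by blast
    have c: "card {e\<in>U. E e \<inter> insert w R \<noteq> {} \<and> E e \<inter> insert w R \<subseteq> S}
       = card {e\<in>U. E e \<inter> R \<noteq> {} \<and> E e \<inter> R \<subseteq> S} + card {e\<in>U. w \<in> E e \<and> E e \<inter> R = {}}"
      unfolding eq by (rule card_Un_disjoint) (use fU in auto)
    have fS: "finite S" using SV fV finite_subset by blast
    have ii: "(insert w R \<subseteq> S) = (R \<subseteq> S)" using True by auto
    have s1: "sum a' S = sum a S + d" using sa[OF fS] True by simp
    define Old where "Old = {e\<in>U. E e \<inter> R \<noteq> {} \<and> E e \<inter> R \<subseteq> S}"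
    define New where "New = {e\<in>U. E e \<inter> insert w R \<noteq> {} \<and> E e \<inter> insert w R \<subseteq> S}"
    have A: "int (card Old) - (if R \<subseteq> S then 1 else 0) \<le> sum a S" using cS[OF SV] unfolding Old_def .
    have B: "int (card New) = int (card Old) + d" using c unfolding New_def Old_def d_def by simp
    have "int (card New) - (if insert w R \<subseteq> S then 1 else 0) \<le> sum a' S"
      unfolding ii using A B s1 by linarith
    then show ?thesis unfolding New_def .
  next
    case False
    define Old where "Old = {e\<in>U. E e \<inter> R \<noteq> {} \<and> E e \<inter> R \<subseteq> S}"
    have fO: "finite Old" unfolding Old_def using fU by auto
    have sub: "{e\<in>U. E e \<inter> insert w R \<noteq> {} \<and> E e \<inter> insert w R \<subseteq> S} \<subseteq> Old - {e0}"
      unfolding Old_def using False e0 by blast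
    have c1: "card {e\<in>U. E e \<inter> insert w R \<noteq> {} \<and> E e \<inter> insert w R \<subseteq> S} \<le> card (Old - {e0})"
      by (rule card_mono) (use fO sub in auto)
    have c2: "card (Old - {e0}) + (if R \<subseteq> S then 1 else 0) \<le> card Old"
    proof (cases "R \<subseteq> S")
      case True
      then have "e0 \<in> Old" unfolding Old_def using e0 by auto
      then have "card Old > 0" using fO card_gt_0_iff by blast
      then show ?thesis using True fO \<open>e0 \<in> Old\<close> by (simp add: card_Diff_singleton)
    next
      case False
      then show ?thesis by (simp add: card_mono fO)
    qed
    have fS: "finite S" using SV fV finite_subset by blast
    have "\<not> insert w R \<subseteq> S" using False by auto
    define New where "New = {e\<in>U. E e \<inter> insert w R \<noteq> {} \<and> E e \<inter> insert w R \<subseteq> S}"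
    have A: "int (card Old) - (if R \<subseteq> S then 1 else 0) \<le> sum a S" using cS[OF SV] unfolding Old_def .
    have B: "int (card New) + (if R \<subseteq> S then 1 else 0) \<le> int (card Old)" using c1 c2 unfolding New_def by (cases "R \<subseteq> S") auto
    have C: "sum a' S = sum a S" using sa[OF fS] False by simp
    have "int (card New) - (if insert w R \<subseteq> S then 1 else 0) \<le> sum a' S"
    proof (cases "R \<subseteq> S")
      case True
      then show ?thesis using A B C \<open>\<not> insert w R \<subseteq> S\<close> by simp
    next
      case False
      then show ?thesis using A B C \<open>\<not> insert w R \<subseteq> S\<close> by simp
    qed
    then show ?thesis unfolding New_def .
  qed
  have "Inv V E U v (insert w R) a'"
    unfolding Inv_def
  proof (intro conjI allI impI)
    show "v \<in> insert w R" using vR by simp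
    show "insert w R \<subseteq> V" using RV e0 by simp
    show "sum a' V = int (card {e\<in>U. E e \<inter> insert w R \<noteq> {}}) - 1" by (rule sV')
    fix S assume "S \<subseteq> V" then show "sum a' S \<ge> int (card {e\<in>U. E e \<inter> insert w R \<noteq> {} \<and> E e \<inter> insert w R \<subseteq> S}) - (if insert w R \<subseteq> S then 1 else 0)" by (rule cS')
  qed
  then show ?thesis by (simp only: a'_def d_def)
qed


lemma inv_exists:
  assumes fV: "finite V" and fU: "finite U" and vV: "v \<in> V"
    and conn: "hg_connected V E U" and EV: "\<forall>e\<in>U. E e \<subseteq> V"
  shows "1 \<le> k \<Longrightarrow> k \<le> card V \<Longrightarrow> \<exists>R a. card R = k \<and> Inv V E U v R a"
proof (induction k)
  case 0 then show ?case by simp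
next
  case (Suc k)
  show ?case
  proof (cases "k = 0")
    case True
    have c: "card {v} = Suc k" using True by simp
    show ?thesis using inv_base[OF fV fU vV, of E] c by blast
  next
    case False
    then obtain R a where R: "card R = k" "Inv V E U v R a" using Suc by auto
    have vR: "v \<in> R" and RV: "R \<subseteq> V" using R(2) unfolding Inv_def by blast+
    have fR: "finite R" using RV fV finite_subset by blast
    have "R \<noteq> V" using R(1) Suc.prems(2) by auto
    moreover have "R \<noteq> {}" using vR by blast
    ultimately obtain e0 x w where e0: "e0 \<in> U" "x \<in> R" "w \<in> V - R" "x \<in> E e0" "w \<in> E e0"
      using crossing[OF conn RV] by blast
    have "Inv V E U v (insert w R)
     (\<lambda>j. a j + (if j = w then int (card {e\<in>U. w \<in> E e \<and> E e \<inter> R = {}}) else 0))"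
      by (rule inv_step[OF fV fU EV R(2) e0])
    moreover have "card (insert w R) = Suc k" using fR e0(3) R(1) by simp
    ultimately show ?thesis by blast
  qed
qed

lemma construct:
  fixes V :: "nat set"
  assumes fV: "finite V" and fU: "finite U" and vV: "v \<in> V"
    and conn: "hg_connected V E U" and EV: "\<forall>e\<in>U. E e \<subseteq> V"
  shows "\<exists>a. sum a V = int (card {e\<in>U. E e \<noteq> {}}) - 1 \<and>
     (\<forall>S. S \<subseteq> V \<and> S \<noteq> V \<longrightarrow> sum a S \<ge> int (card {e\<in>U. E e \<noteq> {} \<and> E e \<subseteq> S}))"
proof -
  have "1 \<le> card V" using fV vV by (metis One_nat_def Suc_leI card_gt_0_iff empty_iff)
  then obtain R a where R: "card R = card V" "Inv V E U v R a"
    using inv_exists[OF fV fU vV conn EV] by blast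
  have RV: "R \<subseteq> V" using R(2) unfolding Inv_def by blast
  have "R = V" using card_subset_eq[OF fV RV R(1)] .
  with R(2) have inv: "Inv V E U v V a" by simp
  have eq1: "{e\<in>U. E e \<inter> V \<noteq> {}} = {e\<in>U. E e \<noteq> {}}" using EV by blast
  have eq2: "{e\<in>U. E e \<inter> V \<noteq> {} \<and> E e \<inter> V \<subseteq> S} = {e\<in>U. E e \<noteq> {} \<and> E e \<subseteq> S}" for S
    using EV by blast
  have "sum a V = int (card {e\<in>U. E e \<noteq> {}}) - 1"
    using inv unfolding Inv_def eq1 by blast
  moreover have "sum a S \<ge> int (card {e\<in>U. E e \<noteq> {} \<and> E e \<subseteq> S})" if "S \<subseteq> V" "S \<noteq> V" for S
  proof -
    have "sum a S \<ge> int (card {e\<in>U. E e \<noteq> {} \<and> E e \<subseteq> S}) - (if V \<subseteq> S then 1 else 0)"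
      using inv that(1) unfolding Inv_def eq2 by blast
    moreover have "\<not> V \<subseteq> S" using that by blast
    ultimately show ?thesis by simp
  qed
  ultimately show ?thesis by blast
qed



context
  fixes I :: "nat \<Rightarrow> 'a set" and n :: nat
  assumes n2: "n \<ge> 2" and fin: "\<forall>j\<in>{1..n}. finite (I j)"
begin

lemma finU: "finite (universe I n)"
  unfolding universe_def using fin by blast

lemma E_sub: "rep_edge I n e \<subseteq> {1..n}"
  unfolding rep_edge_def by blast

lemma E_ne: "e \<in> universe I n \<Longrightarrow> rep_edge I n e \<noteq> {}"
  unfolding rep_edge_def universe_def by blast

lemma inter_eq:
  assumes "S \<subseteq> {1..n}" "S \<noteq> {1..n}"
  shows "(\<Inter>j\<in>{1..n} - S. compl_set I n j) = {e\<in>universe I n. rep_edge I n e \<subseteq> S}"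
proof -
  obtain j0 where j0: "j0 \<in> {1..n} - S" using assms by blast
  show ?thesis
  proof (intro equalityI subsetI)
    fix e assume e: "e \<in> (\<Inter>j\<in>{1..n} - S. compl_set I n j)"
    then have "e \<in> universe I n" using j0 unfolding compl_set_def by blast
    moreover have "rep_edge I n e \<subseteq> S"
      using e unfolding compl_set_def rep_edge_def by blast
    ultimately show "e \<in> {e\<in>universe I n. rep_edge I n e \<subseteq> S}" by blast
  next
    fix e assume "e \<in> {e\<in>universe I n. rep_edge I n e \<subseteq> S}"
    then show "e \<in> (\<Inter>j\<in>{1..n} - S. compl_set I n j)"
      unfolding compl_set_def rep_edge_def by blast
  qed
qed

lemma feasible_iff:
  "feasible I n a \<longleftrightarrow> (\<forall>S. S \<subseteq> {1..n} \<and> S \<noteq> {} \<and> S \<noteq> {1..n} \<longrightarrow>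
      sum a S \<ge> int (card {e\<in>universe I n. rep_edge I n e \<subseteq> S}))"
proof -
  have eq: "\<And>S. S \<subseteq> {1..n} \<and> S \<noteq> {} \<and> S \<noteq> {1..n} \<Longrightarrow>
      (\<Inter>j\<in>{1..n} - S. compl_set I n j) = {e\<in>universe I n. rep_edge I n e \<subseteq> S}"
    using inter_eq by blast
  show ?thesis
  proof
    assume f: "feasible I n a"
    show "\<forall>S. S \<subseteq> {1..n} \<and> S \<noteq> {} \<and> S \<noteq> {1..n} \<longrightarrow>
      sum a S \<ge> int (card {e\<in>universe I n. rep_edge I n e \<subseteq> S})"
    proof (intro allI impI)
      fix S assume S: "S \<subseteq> {1..n} \<and> S \<noteq> {} \<and> S \<noteq> {1..n}"
      have "sum a S \<ge> int (card (\<Inter>j\<in>{1..n} - S. compl_set I n j))"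
        using f S unfolding feasible_def by blast
      then show "sum a S \<ge> int (card {e\<in>universe I n. rep_edge I n e \<subseteq> S})" unfolding eq[OF S] .
    qed
  next
    assume f: "\<forall>S. S \<subseteq> {1..n} \<and> S \<noteq> {} \<and> S \<noteq> {1..n} \<longrightarrow>
      sum a S \<ge> int (card {e\<in>universe I n. rep_edge I n e \<subseteq> S})"
    show "feasible I n a" unfolding feasible_def
    proof (intro allI impI)
      fix S assume S: "S \<subseteq> {1..n} \<and> S \<noteq> {} \<and> S \<noteq> {1..n}"
      have "sum a S \<ge> int (card {e\<in>universe I n. rep_edge I n e \<subseteq> S})"
        using f S by blast
      then show "sum a S \<ge> int (card (\<Inter>j\<in>{1..n} - S. compl_set I n j))" unfolding eq[OF S] .
    qed
  qed
qed

lemma feasible_nonneg: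
  assumes "feasible I n a" shows "sum a {1..n} \<ge> 0"
proof -
  have all: "\<forall>S. S \<subseteq> {1..n} \<and> S \<noteq> {} \<and> S \<noteq> {1..n} \<longrightarrow>
        (\<Sum>j\<in>S. a j) \<ge> int (card (\<Inter>j\<in>{1..n} - S. compl_set I n j))"
    using assms unfolding feasible_def .
  have ne1: "{1::nat} \<noteq> {1..n}"
  proof
    assume "{1::nat} = {1..n}"
    then have "2 \<in> {1::nat}" using n2 by (metis atLeastAtMost_iff one_le_numeral)
    then show False by simp
  qed
  have S1: "{1} \<subseteq> {1..n} \<and> {1} \<noteq> {} \<and> {1} \<noteq> {1..n}" using n2 ne1 by simp
  have "sum a {1} \<ge> int (card (\<Inter>j\<in>{1..n} - {1}. compl_set I n j))"
    using mp[OF spec[OF all, of "{1}"] S1] .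
  then have a1: "a 1 \<ge> 0" using of_nat_0_le_iff[of "card (\<Inter>j\<in>{1..n} - {1}. compl_set I n j)"] by simp
  have ne2: "{2::nat..n} \<noteq> {1..n}"
  proof
    assume "{2::nat..n} = {1..n}"
    then have "1 \<in> {2::nat..n}" using n2 by auto
    then show False by simp
  qed
  have S2: "{2..n} \<subseteq> {1..n} \<and> {2..n} \<noteq> {} \<and> {2..n} \<noteq> {1..n}" using n2 ne2 by simp
  have "sum a {2..n} \<ge> int (card (\<Inter>j\<in>{1..n} - {2..n}. compl_set I n j))"
    using mp[OF spec[OF all, of "{2..n}"] S2] .
  then have a2: "sum a {2..n} \<ge> 0" by (meson of_nat_0_le_iff order_trans)
  have "sum a {1..n} = a 1 + sum a {Suc 1..n}"
    using n2 by (subst sum.atLeast_Suc_atMost) auto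
  then show ?thesis using a1 a2 by (simp add: numeral_2_eq_2)
qed

lemma feasible_ex: "feasible I n (\<lambda>j. int (card (universe I n)))"
  unfolding feasible_iff
proof (intro allI impI)
  fix S assume S: "S \<subseteq> {1..n} \<and> S \<noteq> {} \<and> S \<noteq> {1..n}"
  have fS: "finite S" using S finite_subset by blast
  have "card S \<ge> 1" using S fS by (metis One_nat_def Suc_leI card_gt_0_iff)
  have "card {e\<in>universe I n. rep_edge I n e \<subseteq> S} \<le> card (universe I n)"
    using finU by (intro card_mono) auto
  also have "\<dots> \<le> card S * card (universe I n)" using \<open>card S \<ge> 1\<close> by simp
  finally show "int (card {e\<in>universe I n. rep_edge I n e \<subseteq> S}) \<le> (\<Sum>j\<in>S. int (card (universe I n)))"
    by simp (metis of_nat_le_iff of_nat_mult)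
qed

lemma Mstar_le: "feasible I n a \<Longrightarrow> Mstar I n \<le> sum a {1..n}"
proof -
  assume f: "feasible I n a"
  have "bdd_below {(\<Sum>j\<in>{1..n}. a j) | a. feasible I n a}"
  proof (rule bdd_belowI[of _ 0])
    fix x assume "x \<in> {(\<Sum>j\<in>{1..n}. a j) | a. feasible I n a}"
    then obtain b where "x = sum b {1..n}" "feasible I n b" by blast
    then show "0 \<le> x" using feasible_nonneg by blast
  qed
  moreover have "sum a {1..n} \<in> {(\<Sum>j\<in>{1..n}. a j) | a. feasible I n a}" using f by blast
  ultimately show ?thesis unfolding Mstar_def by (rule cInf_lower[rotated])
qed

lemma Mstar_ge: "(\<And>a. feasible I n a \<Longrightarrow> c \<le> sum a {1..n}) \<Longrightarrow> c \<le> Mstar I n"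
proof -
  assume h: "\<And>a. feasible I n a \<Longrightarrow> c \<le> sum a {1..n}"
  have ne: "{(\<Sum>j\<in>{1..n}. a j) | a. feasible I n a} \<noteq> {}" using feasible_ex by blast
  show ?thesis unfolding Mstar_def
  proof (rule cInf_greatest[OF ne])
    fix x assume "x \<in> {(\<Sum>j\<in>{1..n}. a j) | a. feasible I n a}"
    then obtain b where "x = sum b {1..n}" "feasible I n b" by blast
    then show "c \<le> x" using h by blast
  qed
qed

lemma part1_fwd:
  assumes conn: "hg_connected {1..n} (rep_edge I n) (universe I n)"
  shows "Mstar I n < int (card (universe I n))"
proof -
  have v: "1 \<in> {1..n}" using n2 by simp
  obtain a where a: "sum a {1..n} = int (card {e\<in>universe I n. rep_edge I n e \<noteq> {}}) - 1"
    "\<forall>S. S \<subseteq> {1..n} \<and> S \<noteq> {1..n} \<longrightarrow> sum a S \<ge> int (card {e\<in>universe I n. rep_edge I n e \<noteq> {} \<and> rep_edge I n e \<subseteq> S})"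
  proof -
    have EV: "\<forall>e\<in>universe I n. rep_edge I n e \<subseteq> {1..n}" using E_sub by blast
    show ?thesis using construct[OF finite_atLeastAtMost finU v conn EV] that by blast
  qed
  have eq1: "{e\<in>universe I n. rep_edge I n e \<noteq> {}} = universe I n" using E_ne by blast
  have eq2: "{e\<in>universe I n. rep_edge I n e \<noteq> {} \<and> rep_edge I n e \<subseteq> S} = {e\<in>universe I n. rep_edge I n e \<subseteq> S}" for S
    using E_ne by blast
  have "feasible I n a" unfolding feasible_iff using a(2) unfolding eq2 by blast
  then have "Mstar I n \<le> sum a {1..n}" by (rule Mstar_le)
  then show ?thesis using a(1) unfolding eq1 by simp
qed

lemma part1_bwd:
  assumes nc: "\<not> hg_connected {1..n} (rep_edge I n) (universe I n)"
  shows "Mstar I n \<ge> int (card (universe I n))"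
proof -
  define rel where "rel = {(x, y). x \<in> {1..n} \<and> y \<in> {1..n} \<and> (\<exists>e\<in>universe I n. x \<in> rep_edge I n e \<and> y \<in> rep_edge I n e)}"
  obtain u w where uw: "u \<in> {1..n}" "w \<in> {1..n}" "(u, w) \<notin> rel\<^sup>*"
    using nc unfolding hg_connected_def rel_def by blast
  define C where "C = {x\<in>{1..n}. (u, x) \<in> rel\<^sup>*}"
  define D where "D = {1..n} - C"
  have uC: "u \<in> C" unfolding C_def using uw by blast
  have wD: "w \<in> D" unfolding D_def C_def using uw by blast
  have CV: "C \<subseteq> {1..n}" "D \<subseteq> {1..n}" unfolding C_def D_def by blast+
  have CD: "C \<inter> D = {}" "C \<union> D = {1..n}" unfolding D_def using CV by blast+
  have split: "rep_edge I n e \<subseteq> C \<or> rep_edge I n e \<subseteq> D" if e: "e \<in> universe I n" for e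
  proof (rule ccontr)
    assume "\<not> (rep_edge I n e \<subseteq> C \<or> rep_edge I n e \<subseteq> D)"
    then obtain x y where xy: "x \<in> rep_edge I n e" "x \<in> C" "y \<in> rep_edge I n e" "y \<notin> C"
      using E_sub[of e] unfolding D_def by blast
    have "(x, y) \<in> rel" unfolding rel_def using xy e E_sub[of e] by blast
    moreover have "(u, x) \<in> rel\<^sup>*" using xy(2) unfolding C_def by blast
    ultimately have "(u, y) \<in> rel\<^sup>*" by (meson rtrancl.rtrancl_into_rtrancl)
    then show False using xy E_sub[of e] unfolding C_def by blast
  qed
  show ?thesis
  proof (rule Mstar_ge)
    fix a assume fa: "feasible I n a"
    have all: "\<forall>S. S \<subseteq> {1..n} \<and> S \<noteq> {} \<and> S \<noteq> {1..n} \<longrightarrow>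
      sum a S \<ge> int (card {e\<in>universe I n. rep_edge I n e \<subseteq> S})" using fa unfolding feasible_iff .
    have sC: "sum a C \<ge> int (card {e\<in>universe I n. rep_edge I n e \<subseteq> C})"
    proof -
      have "C \<noteq> {}" using uC by blast
      moreover have "C \<noteq> {1..n}" using wD unfolding D_def by blast
      ultimately have "C \<subseteq> {1..n} \<and> C \<noteq> {} \<and> C \<noteq> {1..n}" using CV(1) by simp
      then show ?thesis using spec[OF all, of C] by (rule mp[rotated])
    qed
    have sD: "sum a D \<ge> int (card {e\<in>universe I n. rep_edge I n e \<subseteq> D})"
    proof -
      have "D \<noteq> {}" using wD by blast
      moreover have "D \<noteq> {1..n}" using uC uw(1) unfolding D_def by blast
      ultimately have "D \<subseteq> {1..n} \<and> D \<noteq> {} \<and> D \<noteq> {1..n}" using CV(2) by simp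
      then show ?thesis using spec[OF all, of D] by (rule mp[rotated])
    qed
    have "universe I n \<subseteq> {e\<in>universe I n. rep_edge I n e \<subseteq> C} \<union> {e\<in>universe I n. rep_edge I n e \<subseteq> D}"
      using split by blast
    then have "card (universe I n) \<le> card ({e\<in>universe I n. rep_edge I n e \<subseteq> C} \<union> {e\<in>universe I n. rep_edge I n e \<subseteq> D})"
      using finU by (intro card_mono) (auto simp del: atLeastAtMost_iff)
    also have "\<dots> \<le> card {e\<in>universe I n. rep_edge I n e \<subseteq> C} + card {e\<in>universe I n. rep_edge I n e \<subseteq> D}"
      by (rule card_Un_le)
    finally have cU: "card (universe I n) \<le> card {e\<in>universe I n. rep_edge I n e \<subseteq> C} + card {e\<in>universe I n. rep_edge I n e \<subseteq> D}" .
    have "sum a {1..n} = sum a C + sum a D"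
    proof -
      have "finite C" "finite D" using CV finite_subset by blast+
      then have "sum a (C \<union> D) = sum a C + sum a D" using CD(1) by (rule sum.union_disjoint)
      then show ?thesis using CD(2) by simp
    qed
    then show "int (card (universe I n)) \<le> sum a {1..n}" using sC sD cU by linarith
  qed
qed

lemma part1: "hg_connected {1..n} (rep_edge I n) (universe I n) \<longleftrightarrow> Mstar I n < int (card (universe I n))"
proof
  assume "hg_connected {1..n} (rep_edge I n) (universe I n)"
  then show "Mstar I n < int (card (universe I n))" by (rule part1_fwd)
next
  assume "Mstar I n < int (card (universe I n))"
  then show "hg_connected {1..n} (rep_edge I n) (universe I n)" using part1_bwd by (meson not_le)
qed

end



lemma univ_rm: "universe (\<lambda>j. I j - {i}) n = universe I n - {i}"
  unfolding universe_def by blast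

lemma conn_rm:
  "hg_connected V (rep_edge (\<lambda>j. I j - {i}) n) (universe (\<lambda>j. I j - {i}) n)
   \<longleftrightarrow> hg_connected V (rep_edge I n) (universe I n - {i})"
proof -
  have "{(x, y). x \<in> V \<and> y \<in> V \<and> (\<exists>e\<in>universe (\<lambda>j. I j - {i}) n. x \<in> rep_edge (\<lambda>j. I j - {i}) n e \<and> y \<in> rep_edge (\<lambda>j. I j - {i}) n e)}
      = {(x, y). x \<in> V \<and> y \<in> V \<and> (\<exists>e\<in>universe I n - {i}. x \<in> rep_edge I n e \<and> y \<in> rep_edge I n e)}"
    unfolding univ_rm unfolding rep_edge_def by blast
  then show ?thesis unfolding hg_connected_def by simp
qed

lemma Mstar_mono:
  fixes I :: "nat \<Rightarrow> 'a set"
  assumes n2: "n \<ge> 2" and fin: "\<forall>j\<in>{1..n}. finite (I j)"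
  shows "Mstar (\<lambda>j. I j - {i}) n \<le> Mstar I n"
proof -
  have fin': "\<forall>j\<in>{1..n}. finite (I j - {i})" using fin by blast
  show ?thesis
  proof (rule Mstar_ge[OF n2 fin])
    fix a assume fa: "feasible I n a"
    have "feasible (\<lambda>j. I j - {i}) n a"
      unfolding feasible_iff[OF n2 fin']
    proof (intro allI impI)
      fix S assume S: "S \<subseteq> {1..n} \<and> S \<noteq> {} \<and> S \<noteq> {1..n}"
      have "sum a S \<ge> int (card {e\<in>universe I n. rep_edge I n e \<subseteq> S})"
        using fa S unfolding feasible_iff[OF n2 fin] by blast
      moreover have "card {e\<in>universe (\<lambda>j. I j - {i}) n. rep_edge (\<lambda>j. I j - {i}) n e \<subseteq> S}
          \<le> card {e\<in>universe I n. rep_edge I n e \<subseteq> S}"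
      proof (rule card_mono)
        show "finite {e\<in>universe I n. rep_edge I n e \<subseteq> S}" using finU[OF n2 fin] by simp
        show "{e\<in>universe (\<lambda>j. I j - {i}) n. rep_edge (\<lambda>j. I j - {i}) n e \<subseteq> S}
          \<subseteq> {e\<in>universe I n. rep_edge I n e \<subseteq> S}"
          unfolding univ_rm unfolding rep_edge_def by blast
      qed
      ultimately show "sum a S \<ge> int (card {e\<in>universe (\<lambda>j. I j - {i}) n. rep_edge (\<lambda>j. I j - {i}) n e \<subseteq> S})"
        by linarith
    qed
    then show "Mstar (\<lambda>j. I j - {i}) n \<le> sum a {1..n}" by (rule Mstar_le[OF n2 fin'])
  qed
qed

theorem lemma4:
  fixes I :: "nat \<Rightarrow> 'a set" and n :: nat
  assumes "n \<ge> 2"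
    and "\<forall>j\<in>{1..n}. finite (I j)"
  shows "(hg_connected {1..n} (rep_edge I n) (universe I n)
            \<longleftrightarrow> Mstar I n < int (card (universe I n)))
       \<and> (one_critical I n
            \<longleftrightarrow> min_conn_dom_edge_set {1..n} (rep_edge I n) (universe I n) (universe I n))"
proof -
  note n2 = assms(1) and fin = assms(2)
  define U where "U = universe I n"
  have fU: "finite U" unfolding U_def by (rule finU[OF n2 fin])
  have fin': "\<forall>j\<in>{1..n}. finite (I j - {i})" for i using fin by blast
  have P1: "hg_connected {1..n} (rep_edge I n) U \<longleftrightarrow> Mstar I n < int (card U)"
    unfolding U_def by (rule part1[OF n2 fin])
  have P1': "hg_connected {1..n} (rep_edge I n) (U - {i}) \<longleftrightarrow> Mstar (\<lambda>j. I j - {i}) n < int (card U) - 1"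
    if iU: "i \<in> U" for i
  proof -
    have "card (U - {i}) = card U - 1" using iU fU by (simp add: card_Diff_singleton)
    moreover have "card U \<ge> 1" using iU fU by (metis One_nat_def Suc_leI card_gt_0_iff empty_iff)
    ultimately have c: "int (card (U - {i})) = int (card U) - 1" by simp
    show ?thesis using part1[OF n2 fin'[of i]] unfolding conn_rm unfolding univ_rm U_def[symmetric] c .
  qed
  have mono: "Mstar (\<lambda>j. I j - {i}) n \<le> Mstar I n" for i by (rule Mstar_mono[OF n2 fin])
  have part2: "one_critical I n \<longleftrightarrow> min_conn_dom_edge_set {1..n} (rep_edge I n) U U"
  proof
    assume oc: "one_critical I n"
    then have eq: "int (card U) - Mstar I n = 1" and crit: "\<forall>i\<in>U. Mstar (\<lambda>j. I j - {i}) n = Mstar I n"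
      unfolding one_critical_def U_def by blast+
    have conn: "hg_connected {1..n} (rep_edge I n) U" using P1 eq by simp
    have "\<not> hg_connected {1..n} (rep_edge I n) (U - {i})" if "i \<in> U" for i
      using P1'[OF that] crit that eq by simp
    then show "min_conn_dom_edge_set {1..n} (rep_edge I n) U U"
      unfolding min_conn_dom_edge_set_def using conn by blast
  next
    assume m: "min_conn_dom_edge_set {1..n} (rep_edge I n) U U"
    then have conn: "hg_connected {1..n} (rep_edge I n) U"
      and mn: "\<forall>i\<in>U. \<not> hg_connected {1..n} (rep_edge I n) (U - {i})"
      unfolding min_conn_dom_edge_set_def by blast+
    have lt: "Mstar I n < int (card U)" using P1 conn by simp
    have "U \<noteq> {}"
    proof
      assume U0: "U = {}"
      have "(1, 2) \<in> {(x, y). x \<in> {1..n} \<and> y \<in> {1..n} \<and> (\<exists>e\<in>U. x \<in> rep_edge I n e \<and> y \<in> rep_edge I n e)}\<^sup>*"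
        using conn n2 unfolding hg_connected_def by simp
      moreover have "{(x, y). x \<in> {1..n} \<and> y \<in> {1..n} \<and> (\<exists>e\<in>U. x \<in> rep_edge I n e \<and> y \<in> rep_edge I n e)} = {}"
        using U0 by blast
      ultimately have "(1::nat, 2::nat) \<in> Id" by (metis rtrancl_empty)
      then show False by simp
    qed
    then obtain i0 where i0: "i0 \<in> U" by blast
    have ge: "Mstar (\<lambda>j. I j - {i}) n \<ge> int (card U) - 1" if "i \<in> U" for i
      using P1'[OF that] mn that by simp
    have eqM: "Mstar I n = int (card U) - 1" using ge[OF i0] mono[of i0] lt by simp
    show "one_critical I n"
      unfolding one_critical_def U_def[symmetric]
    proof (intro conjI ballI)
      show "int (card U) - Mstar I n = 1" using eqM by simp
      fix i assume "i \<in> U"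
      then show "Mstar (\<lambda>j. I j - {i}) n = Mstar I n" using ge mono[of i] eqM by fastforce
    qed
  qed
  show ?thesis using P1 part2 unfolding U_def by blast
qed

end
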